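(* Let $\mathbb{F}_q$ be a finite field, $\mathcal{C}\subseteq\mathbb{F}_q^n$ a linear $[n,k]$ code with dual code $\mathcal{C}^\perp$, and $\mathbb{P}$ a poset on $[n]=\{1,\dots,n\}$ with dual poset $\widetilde{\mathbb{P}}$. For $1\le r\le k$, $$d_r^{\mathbb{P}}(\mathcal{C})=\min\{|\langle J\rangle_{\mathbb{P}}| : J\subseteq[n],\ |J|-\rho^\perp(J)\ge r\}=\min\{|\langle J\rangle_{\mathbb{P}}| : J\subseteq[n],\ |J|-\rho^\perp(J)= r\}.$$ For $1\le s\le n-k$, $$d_s^{\widetilde{\mathbb{P}}}(\mathcal{C}^\perp)=\min\{|\langle J\rangle_{\widetilde{\mathbb{P}}}| : J\subseteq[n],\ |J|-\rho(J)\ge s\}=\min\{|\langle J\rangle_{\widetilde{\mathbb{P}}}| : J\subseteq[n],\ |J|-\rho(J)= s\}.$$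
   Context: The dual poset $\widetilde{\mathbb{P}}$ has $i\le_{\widetilde{\mathbb{P}}}j$ iff $j\le_{\mathbb{P}}i$. For $J\subseteq[n]$, $\langle J\rangle_{\mathbb{P}}=\{i:i\le_{\mathbb{P}}j\text{ for some }j\in J\}$ (the smallest ideal of $\mathbb{P}$ containing $J$), and similarly for $\widetilde{\mathbb{P}}$. For $u\in\mathbb{F}_q^n$, $\mathrm{supp}(u)=\{i:u_i\ne0\}$; for $D\subseteq\mathbb{F}_q^n$, $\mathrm{supp}(D)=\bigcup_{u\in D}\mathrm{supp}(u)$ and $w_{\mathbb{P}}(D)=|\langle\mathrm{supp}(D)\rangle_{\mathbb{P}}|$. The $r$-th generalized minimum $\mathbb{P}$-weight is $d_r^{\mathbb{P}}(\mathcal{C})=\min\{w_{\mathbb{P}}(D): D \text{ an } r\text{-dimensional subspace of }\mathcal{C}\}$, and $d_s^{\widetilde{\mathbb{P}}}(\mathcal{C}^\perp)=\min\{w_{\widetilde{\mathbb{P}}}(D): D \text{ an } s\text{-dimensional subspace of }\mathcal{C}^\perp\}$. For $A\subseteq[n]$, $\mathcal{C}|A=\{(u_i)_{i\in A}:u\in\mathcal{C}\}$; $\rho(A)=\dim(\mathcal{C}|A)$ and $\rho^\perp(A)=\dim(\mathcal{C}^\perp|A)$ are the rank and corank functions of the matroid of $\mathcal{C}$. *)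

theory Defs
  imports "HOL-Analysis.Analysis"
begin

text \<open>Coordinates are indexed by a finite type 'n, playing the role of [n]
 (so n = CARD('n)). Vectors of F_q^n are elements of 'a^'n for a finite field 'a.\<close>

definition is_poset :: "('n \<Rightarrow> 'n \<Rightarrow> bool) \<Rightarrow> bool" where
  "is_poset le \<longleftrightarrow> reflp le \<and> transp le \<and> antisymp le"

definition dual_poset :: "('n \<Rightarrow> 'n \<Rightarrow> bool) \<Rightarrow> ('n \<Rightarrow> 'n \<Rightarrow> bool)" where
  "dual_poset le = (\<lambda>i j. le j i)"

definition ideal_of :: "('n \<Rightarrow> 'n \<Rightarrow> bool) \<Rightarrow> 'n set \<Rightarrow> 'n set" where
  "ideal_of le J = {i. \<exists>j\<in>J. le i j}"

definition supp :: "'a::zero ^ 'n \<Rightarrow> 'n set" where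
  "supp u = {i. u $ i \<noteq> 0}"

definition supp_set :: "('a::zero ^ 'n) set \<Rightarrow> 'n set" where
  "supp_set D = (\<Union>u\<in>D. supp u)"

definition poset_weight :: "('n \<Rightarrow> 'n \<Rightarrow> bool) \<Rightarrow> ('a::zero ^ 'n) set \<Rightarrow> nat" where
  "poset_weight le D = card (ideal_of le (supp_set D))"

definition dual_code :: "('a::field ^ 'n) set \<Rightarrow> ('a ^ 'n) set" where
  "dual_code C = {v. \<forall>u\<in>C. (\<Sum>i\<in>UNIV. u $ i * v $ i) = 0}"

definition gen_weight :: "('n::finite \<Rightarrow> 'n \<Rightarrow> bool) \<Rightarrow> ('a::field ^ 'n) set \<Rightarrow> nat \<Rightarrow> nat" where
  "gen_weight le C r = Min {poset_weight le D | D. vec.subspace D \<and> D \<subseteq> C \<and> vec.dim D = r}"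

text \<open>Restriction C|A, realised as the projection that zeroes the coordinates outside A
 (a linear isomorphic copy of the punctured code, hence of the same dimension).\<close>
definition restrict_code :: "('a::field ^ 'n) set \<Rightarrow> 'n set \<Rightarrow> ('a ^ 'n) set" where
  "restrict_code C A = (\<lambda>u. \<chi> i. if i \<in> A then u $ i else 0) ` C"

definition code_rank :: "('a::field ^ 'n::finite) set \<Rightarrow> 'n set \<Rightarrow> nat" where
  "code_rank C A = vec.dim (restrict_code C A)"

end

theory Submission
  imports Defs
begin

lemma rows_le_columns:
  fixes A :: "'a::field^'n^'m"
  shows "vec.dim (rows A) \<le> vec.dim (columns A)"
proof -
  obtain B where B: "B \<subseteq> columns A" "vec.independent B" "columns A \<subseteq> vec.span B"
      "card B = vec.dim (columns A)" using vec.basis_exists by blast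
  have fB: "finite B" using B(2) vec.finiteI_independent by blast
  define r where "r b = (\<chi> j. vec.representation B (column j A) b)" for b
  have col: "column j A \<in> vec.span B" for j using B(3) unfolding columns_def by blast
  have rowi: "A $ i = (\<Sum>b\<in>B. (b $ i) *s r b)" for i
  proof -
    have "A $ i $ j = (\<Sum>b\<in>B. (b $ i) * vec.representation B (column j A) b)" for j
    proof -
      have "(\<Sum>b\<in>B. vec.representation B (column j A) b *s b) = column j A"
        using vec.sum_representation_eq[OF B(2) col fB] by simp
      hence "(\<Sum>b\<in>B. vec.representation B (column j A) b *s b) $ i = A $ i $ j"
        by (simp add: column_def)
      thus ?thesis by (simp add: sum_component mult.commute)
    qed
    thus ?thesis by (simp add: vec_eq_iff sum_component r_def)
  qed
  have "rows A \<subseteq> vec.span (r ` B)"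
  proof
    fix x assume "x \<in> rows A"
    then obtain i where x: "x = A $ i" by (auto simp: rows_def row_def)
    show "x \<in> vec.span (r ` B)" unfolding x rowi
      by (intro vec.span_sum vec.span_scale vec.span_base) auto
  qed
  hence "vec.dim (rows A) \<le> card (r ` B)" using fB by (intro vec.dim_le_card) auto
  also have "\<dots> \<le> card B" using fB card_image_le by blast
  finally show ?thesis using B(4) by simp
qed

lemma rows_eq_columns:
  fixes A :: "'a::field^'n^'m"
  shows "vec.dim (rows A) = vec.dim (columns A)"
  using rows_le_columns[of A] rows_le_columns[of "transpose A"] by simp


lemma rank_nullity:
  fixes f :: "'a::field^'n \<Rightarrow> 'a^'m"
  assumes lin: "Vector_Spaces.linear (*s) (*s) f"
  shows "vec.dim {x. f x = 0} + vec.dim (range f) = CARD('n)"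
proof -
  interpret lf: Vector_Spaces.linear "(*s)" "(*s)" f by fact
  obtain K where K: "K \<subseteq> {x. f x = 0}" "vec.independent K" "{x. f x = 0} \<subseteq> vec.span K"
      "card K = vec.dim {x. f x = 0}" using vec.basis_exists by blast
  obtain B where B: "K \<subseteq> B" "vec.independent B" "UNIV \<subseteq> vec.span B"
    using vec.maximal_independent_subset_extend[of K UNIV] K(2) by (metis subset_UNIV)
  have fB: "finite B" using B(2) vec.finiteI_independent by blast
  have cB: "card B = CARD('n)"
    using vec.basis_card_eq_dim[of B UNIV] B vec_dim_card by auto
  define E where "E = B - K"
  have iE: "vec.independent E" using B(2) vec.independent_mono E_def by blast
  have cE: "card E = card B - card K" unfolding E_def using B(1) fB
    by (meson card_Diff_subset finite_subset)
  have cKB: "card K \<le> card B" using B(1) fB card_mono by blast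
  have KE: "K \<union> E = B" using B(1) E_def by blast
  have sums: "{x + y |x y. x \<in> vec.span K \<and> y \<in> vec.span E} = UNIV"
    using vec.span_Un[of K E] KE B(3) by auto
  have "vec.dim {x + y |x y. x \<in> vec.span K \<and> y \<in> vec.span E} + vec.dim (vec.span K \<inter> vec.span E)
      = vec.dim (vec.span K) + vec.dim (vec.span E)"
    by (rule vec.dim_sums_Int) auto
  moreover have "vec.dim (UNIV :: ('a^'n) set) = CARD('n)" by (rule vec_dim_card)
  moreover have "vec.dim (vec.span K) = card K" "vec.dim (vec.span E) = card E"
    using K(2) iE vec.dim_span_eq_card_independent by blast+
  ultimately have "vec.dim (vec.span K \<inter> vec.span E) = 0"
    using sums cB cE cKB by simp
  hence int0: "vec.span K \<inter> vec.span E \<subseteq> {0}" by simp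
  have f0K: "f x = 0" if "x \<in> vec.span K" for x
    using lf.eq_0_on_span[OF _ that] K(1) by auto
  have inj: "inj_on f (vec.span E)"
  proof (subst lf.inj_on_iff_eq_0)
    show "vec.subspace (vec.span E)" by simp
    show "\<forall>x\<in>vec.span E. f x = 0 \<longrightarrow> x = 0" using K(3) int0 by blast
  qed
  have rng: "range f = f ` vec.span E"
  proof
    show "range f \<subseteq> f ` vec.span E"
    proof
      fix z assume "z \<in> range f"
      then obtain x where z: "z = f x" by blast
      obtain a b where ab: "x = a + b" "a \<in> vec.span K" "b \<in> vec.span E"
        using sums by blast
      have "f x = f b" using ab f0K lf.add by simp
      thus "z \<in> f ` vec.span E" using z ab by blast
    qed
  qed auto
  have "vec.dim (range f) = vec.dim (vec.span E)"
    unfolding rng by (rule vec.dim_image_eq[OF lin]) (simp add: inj vec.span_span)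
  also have "\<dots> = card E" using iE vec.dim_span_eq_card_independent by blast
  finally show ?thesis using K(4) cE cKB cB by simp
qed


lemma column_axis: "(A::'a::field^'n^'m) *v axis j 1 = column j A"
  by (simp add: matrix_vector_mult_def column_def vec_eq_iff axis_def if_distrib sum.If_cases
      cong del: if_weak_cong)

lemma dim_range_columns:
  fixes A :: "'a::field^'n^'m"
  shows "vec.dim (range ((*v) A)) = vec.dim (columns A)"
proof (rule antisym)
  show "vec.dim (range ((*v) A)) \<le> vec.dim (columns A)"
    by (rule vec.dim_mono) (auto intro: matrix_vector_mult_in_columnspace_gen)
  show "vec.dim (columns A) \<le> vec.dim (range ((*v) A))"
    by (rule vec.dim_subset) (auto simp: columns_def column_axis[symmetric])
qed

lemma dim_dual:
  fixes W :: "('a::{finite,field} ^ 'n::finite) set"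
  assumes W: "vec.subspace W"
  shows "vec.dim (dual_code W) + vec.dim W = CARD('n)"
proof -
  define A :: "'a^'n^('a^'n)" where "A = (\<chi> v. if v \<in> W then v else 0)"
  have ker: "dual_code W = {x. A *v x = 0}"
    by (auto simp: dual_code_def A_def vec_eq_iff matrix_vector_mult_def)
  have W0: "0 \<in> W" using W vec.subspace_0 by blast
  have rows: "rows A = W"
  proof
    show "rows A \<subseteq> W" using W0 by (auto simp: rows_def row_def A_def)
    show "W \<subseteq> rows A"
    proof
      fix w assume "w \<in> W"
      hence "w = row w A" by (simp add: row_def A_def vec_eq_iff)
      thus "w \<in> rows A" unfolding rows_def by blast
    qed
  qed
  have "vec.dim {x. A *v x = 0} + vec.dim (range ((*v) A)) = CARD('n)"
    by (rule rank_nullity) (rule matrix_vector_mul_linear_gen)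
  thus ?thesis using ker rows dim_range_columns[of A] rows_eq_columns[of A] by simp
qed


lemma subspace_dual: "vec.subspace (dual_code (W :: ('a::field ^ 'n::finite) set))"
proof (rule vec.subspaceI)
  show "0 \<in> dual_code W" by (simp add: dual_code_def)
  fix x y assume "x \<in> dual_code W" "y \<in> dual_code W"
  thus "x + y \<in> dual_code W"
    by (simp add: dual_code_def distrib_left sum.distrib)
next
  fix c x assume "x \<in> dual_code W"
  thus "c *s x \<in> dual_code W"
  proof -
    have "(\<Sum>i\<in>UNIV. u $ i * (c * x $ i)) = c * (\<Sum>i\<in>UNIV. u $ i * x $ i)" for u :: "'a^'n"
      by (simp add: sum_distrib_left mult.left_commute)
    thus ?thesis using \<open>x \<in> dual_code W\<close> by (simp add: dual_code_def)
  qed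
qed

lemma dual_dual_sub: "W \<subseteq> dual_code (dual_code (W :: ('a::field ^ 'n::finite) set))"
  by (auto simp: dual_code_def mult.commute)

lemma double_dual:
  fixes W :: "('a::{finite,field} ^ 'n::finite) set"
  assumes W: "vec.subspace W"
  shows "dual_code (dual_code W) = W"
proof -
  have "vec.dim (dual_code (dual_code W)) + vec.dim (dual_code W) = CARD('n)"
    by (rule dim_dual[OF subspace_dual])
  moreover have "vec.dim (dual_code W) + vec.dim W = CARD('n)" by (rule dim_dual[OF W])
  ultimately have "vec.dim (dual_code (dual_code W)) \<le> vec.dim W" by simp
  thus ?thesis using vec.subspace_dim_equal[OF W subspace_dual dual_dual_sub] by simp
qed


definition proj :: "'n set \<Rightarrow> 'a::zero^'n::finite \<Rightarrow> 'a^'n" where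
  "proj J x = (\<chi> i. if i \<in> J then x $ i else 0)"

definition SS :: "'n::finite set \<Rightarrow> ('a::zero^'n) set" where
  "SS J = {x. \<forall>i. i \<notin> J \<longrightarrow> x $ i = 0}"

lemma linear_proj: "Vector_Spaces.linear (*s) (*s) (proj J :: 'a::field^'n::finite \<Rightarrow> _)"
  unfolding Vector_Spaces.linear_iff
  by (auto simp: proj_def vec_eq_iff vec.vector_space_axioms)

lemma subspace_SS: "vec.subspace (SS J :: ('a::field^'n::finite) set)"
  by (rule vec.subspaceI) (auto simp: SS_def)

lemma dim_SS: "vec.dim (SS J :: ('a::field^'n::finite) set) = card J"
  unfolding SS_def by (rule dim_substandard_cart)

lemma ip_SS: "(x::'a::field^'n::finite) \<in> SS J \<Longrightarrow> (\<Sum>i\<in>UNIV. x $ i * proj J y $ i) = (\<Sum>i\<in>UNIV. x $ i * y $ i)"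
  by (intro sum.cong) (auto simp: SS_def proj_def)

lemma ip_SS': "(x::'a::field^'n::finite) \<in> SS J \<Longrightarrow> (\<Sum>i\<in>UNIV. proj J y $ i * x $ i) = (\<Sum>i\<in>UNIV. y $ i * x $ i)"
  by (intro sum.cong) (auto simp: SS_def proj_def)

lemma key_G:
  fixes C :: "('a::{finite,field} ^ 'n::finite) set"
  assumes C: "vec.subspace C"
  shows "card J - code_rank (dual_code C) J = vec.dim {u\<in>C. supp u \<subseteq> J}"
proof -
  define P where "P = restrict_code (dual_code C) J"
  have Pdef: "P = proj J ` dual_code C" by (simp add: P_def restrict_code_def proj_def[abs_def])
  interpret lp: Vector_Spaces.linear "(*s)" "(*s)" "proj J :: 'a^'n \<Rightarrow> _" by (rule linear_proj)
  have subP: "vec.subspace P" unfolding Pdef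
    by (rule lp.subspace_image[OF subspace_dual])
  have PS: "P \<subseteq> SS J" unfolding Pdef by (auto simp: SS_def proj_def)
  have dimP: "vec.dim P \<le> card J" using vec.dim_subset[OF PS] dim_SS by metis
  define Q where "Q = dual_code P"
  have subQ: "vec.subspace Q" unfolding Q_def by (rule subspace_dual)
  have U: "{u\<in>C. supp u \<subseteq> J} = Q \<inter> SS J"
  proof -
    have "u \<in> Q \<longleftrightarrow> u \<in> dual_code (dual_code C)" if "u \<in> SS J" for u
      using ip_SS'[OF that] by (auto simp: Q_def Pdef dual_code_def)
    moreover have "supp u \<subseteq> J \<longleftrightarrow> u \<in> SS J" for u :: "'a^'n"
      by (auto simp: supp_def SS_def)
    ultimately show ?thesis using double_dual[OF C] by blast
  qed
  have sums: "{x + y |x y. x \<in> Q \<inter> SS J \<and> y \<in> SS (- J)} = Q"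
  proof
    show "{x + y |x y. x \<in> Q \<inter> SS J \<and> y \<in> SS (- J)} \<subseteq> Q"
    proof clarify
      fix x y :: "'a^'n" assume xy: "x \<in> Q" "x \<in> SS J" "y \<in> SS (- J)"
      have "y \<in> Q"
      proof -
        have "(\<Sum>i\<in>UNIV. p $ i * y $ i) = 0" if "p \<in> P" for p
          using PS that xy(3) by (intro sum.neutral) (auto simp: SS_def)
        thus ?thesis by (simp add: Q_def dual_code_def)
      qed
      thus "x + y \<in> Q" using xy(1) subQ vec.subspace_add by blast
    qed
    show "Q \<subseteq> {x + y |x y. x \<in> Q \<inter> SS J \<and> y \<in> SS (- J)}"
    proof
      fix x assume x: "x \<in> Q"
      have "proj J x \<in> Q"
        using x PS ip_SS by (fastforce simp: Q_def dual_code_def)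
      moreover have "proj J x \<in> SS J" "proj (- J) x \<in> SS (- J)" by (auto simp: SS_def proj_def)
      moreover have "x = proj J x + proj (- J) x" by (simp add: proj_def vec_eq_iff)
      ultimately show "x \<in> {x + y |x y. x \<in> Q \<inter> SS J \<and> y \<in> SS (- J)}" by blast
    qed
  qed
  have int: "(Q \<inter> SS J) \<inter> SS (- J) \<subseteq> {0}" by (auto simp: SS_def vec_eq_iff) (metis ComplI)
  have "vec.dim {x + y |x y. x \<in> Q \<inter> SS J \<and> y \<in> SS (- J)} + vec.dim ((Q \<inter> SS J) \<inter> SS (- J))
      = vec.dim (Q \<inter> SS J) + vec.dim (SS (- J) :: ('a^'n) set)"
    by (rule vec.dim_sums_Int) (auto intro: vec.subspace_inter subQ subspace_SS)
  moreover have "vec.dim ((Q \<inter> SS J) \<inter> SS (- J)) = 0" using int by simp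
  moreover have "vec.dim (SS (- J) :: ('a^'n) set) = CARD('n) - card J"
    using dim_SS[of "- J"] card_Diff_subset[of J UNIV] by (simp add: Compl_eq_Diff_UNIV)
  ultimately have "vec.dim Q = vec.dim (Q \<inter> SS J) + (CARD('n) - card J)"
    using sums by simp
  moreover have "vec.dim Q + vec.dim P = CARD('n)" unfolding Q_def by (rule dim_dual[OF subP])
  moreover have "card J \<le> CARD('n)" by (simp add: card_mono)
  ultimately have "vec.dim (Q \<inter> SS J) = card J - vec.dim P" using dimP by linarith
  thus ?thesis using U by (simp add: code_rank_def P_def)
qed

definition CJ :: "('a::field ^ 'n::finite) set \<Rightarrow> 'n set \<Rightarrow> ('a ^ 'n) set" where
  "CJ C J = {u\<in>C. supp u \<subseteq> J}"

lemma CJ_eq: "CJ C J = C \<inter> SS J"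
  by (auto simp: CJ_def SS_def supp_def)

lemma subspace_CJ: "vec.subspace C \<Longrightarrow> vec.subspace (CJ C J)"
  unfolding CJ_eq by (rule vec.subspace_inter) (auto intro: subspace_SS)

lemma CJ_drop:
  assumes C: "vec.subspace (C :: ('a::field ^ 'n::finite) set)"
  shows "vec.dim (CJ C J) \<le> vec.dim (CJ C (J - {i})) + 1"
proof (cases "\<exists>w\<in>CJ C J. w $ i \<noteq> 0")
  case False
  hence "CJ C J \<subseteq> CJ C (J - {i})" by (auto simp: CJ_def supp_def)
  hence "vec.dim (CJ C J) \<le> vec.dim (CJ C (J - {i}))" by (rule vec.dim_subset)
  thus ?thesis by linarith
next
  case True
  then obtain w where w: "w \<in> CJ C J" "w $ i \<noteq> 0" by blast
  have wC: "w \<in> C" and wJ: "\<And>k. k \<notin> J \<Longrightarrow> w $ k = 0"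
    using w(1) by (auto simp: CJ_def supp_def)
  have "CJ C J \<subseteq> vec.span (insert w (CJ C (J - {i})))"
  proof
    fix u assume u: "u \<in> CJ C J"
    have uC: "u \<in> C" and uJ: "\<And>k. k \<notin> J \<Longrightarrow> u $ k = 0"
      using u by (auto simp: CJ_def supp_def)
    define c where "c = u $ i / w $ i"
    define v where "v = u - c *s w"
    have "c *s w \<in> C" using wC C by (rule_tac vec.subspace_scale) 
    hence "v \<in> C" unfolding v_def using uC C by (rule_tac vec.subspace_diff) 
    moreover have "v $ k = 0" if "k \<notin> J - {i}" for k
    proof (cases "k = i")
      case True
      thus ?thesis using w(2) by (simp add: v_def c_def)
    next
      case False
      hence "k \<notin> J" using that by blast
      thus ?thesis using uJ wJ by (simp add: v_def)
    qed
    ultimately have "v \<in> CJ C (J - {i})" by (auto simp: CJ_def supp_def)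
    hence "v \<in> vec.span (insert w (CJ C (J - {i})))" by (simp add: vec.span_base)
    moreover have "c *s w \<in> vec.span (insert w (CJ C (J - {i})))"
      by (simp add: vec.span_base vec.span_scale)
    ultimately have "v + c *s w \<in> vec.span (insert w (CJ C (J - {i})))"
      by (rule vec.span_add)
    thus "u \<in> vec.span (insert w (CJ C (J - {i})))" by (simp add: v_def)
  qed
  hence "vec.dim (CJ C J) \<le> vec.dim (insert w (CJ C (J - {i})))" by (rule vec.dim_mono)
  also have "\<dots> \<le> vec.dim (CJ C (J - {i})) + 1" by (simp add: vec.dim_insert)
  finally show ?thesis .
qed

lemma CJ_descent:
  assumes C: "vec.subspace (C :: ('a::field ^ 'n::finite) set)"
  shows "vec.dim (CJ C J0) \<ge> r \<Longrightarrow> \<exists>J\<subseteq>J0. vec.dim (CJ C J) = r"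
proof (induction J0 rule: finite_induct[OF finite])
  case 1
  have "CJ C {} \<subseteq> {0}" by (auto simp: CJ_def supp_def vec_eq_iff)
  hence d0: "vec.dim (CJ C {}) = 0" using vec.dim_eq_0 by blast
  show ?case using d0 1 by (metis empty_subsetI le_zero_eq)
next
  case (2 x F)
  show ?case
  proof (cases "vec.dim (CJ C (insert x F)) = r")
    case True thus ?thesis by blast
  next
    case False
    have "vec.dim (CJ C (insert x F)) \<le> vec.dim (CJ C (insert x F - {x})) + 1"
      by (rule CJ_drop[OF C])
    moreover have "insert x F - {x} = F" using 2(2) by blast
    ultimately have "vec.dim (CJ C F) \<ge> r" using False 2(4) by simp
    then obtain J where "J \<subseteq> F" "vec.dim (CJ C J) = r" using 2(3) by blast
    thus ?thesis by blast
  qed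
qed

lemma exists_sub_dim:
  assumes C: "vec.subspace (C :: ('a::field ^ 'n::finite) set)" and r: "r \<le> vec.dim C"
  shows "\<exists>D. vec.subspace D \<and> D \<subseteq> C \<and> vec.dim D = r"
proof -
  obtain B where B: "B \<subseteq> C" "vec.independent B" "C \<subseteq> vec.span B" "card B = vec.dim C"
    using vec.basis_exists by blast
  obtain B' where B': "B' \<subseteq> B" "card B' = r" using r B(4) obtain_subset_with_card_n by metis
  have iB': "vec.independent B'" using B(2) B'(1) vec.independent_mono by blast
  show ?thesis
  proof (intro exI conjI)
    show "vec.subspace (vec.span B')" by simp
    show "vec.span B' \<subseteq> C" using B'(1) B(1) C vec.span_minimal by blast
    show "vec.dim (vec.span B') = r" using iB' B'(2) vec.dim_span_eq_card_independent by metis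
  qed
qed

lemma ideal_mono: "J \<subseteq> J' \<Longrightarrow> card (ideal_of le J) \<le> card (ideal_of le (J' :: 'n::finite set))"
  by (rule card_mono) (auto simp: ideal_of_def)

lemma supp_set_CJ: "D \<subseteq> CJ C J \<Longrightarrow> supp_set D \<subseteq> J"
  by (auto simp: CJ_def supp_set_def)

lemma main_M:
  fixes C :: "('a::field ^ 'n::finite) set" and le :: "'n \<Rightarrow> 'n \<Rightarrow> bool"
  assumes C: "vec.subspace C" and r: "r \<le> vec.dim C"
  shows "gen_weight le C r = Min {card (ideal_of le J) | J. vec.dim (CJ C J) \<ge> r}
       \<and> gen_weight le C r = Min {card (ideal_of le J) | J. vec.dim (CJ C J) = r}"
proof -
  define A where "A = {poset_weight le D | D. vec.subspace D \<and> D \<subseteq> C \<and> vec.dim D = r}"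
  define B1 where "B1 = {card (ideal_of le J) | J. vec.dim (CJ C J) \<ge> r}"
  define B2 where "B2 = {card (ideal_of le J) | J. vec.dim (CJ C J) = r}"
  have fA: "finite A"
  proof -
    have "poset_weight le D \<le> CARD('n)" for D :: "('a^'n) set"
      unfolding poset_weight_def by (rule card_mono) auto
    hence "A \<subseteq> {..CARD('n)}" unfolding A_def by auto
    thus ?thesis by (rule finite_subset) simp
  qed
  have fB1: "finite B1"
  proof -
    have "B1 \<subseteq> range (\<lambda>J. card (ideal_of le J))" unfolding B1_def by blast
    thus ?thesis by (rule finite_subset) (rule finite_imageI[OF finite])
  qed
  have fB2: "finite B2"
  proof -
    have "B2 \<subseteq> range (\<lambda>J. card (ideal_of le J))" unfolding B2_def by blast
    thus ?thesis by (rule finite_subset) (rule finite_imageI[OF finite])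
  qed
  have B21: "B2 \<subseteq> B1"
  proof
    fix x assume "x \<in> B2"
    then obtain J where "x = card (ideal_of le J)" "vec.dim (CJ C J) = r" unfolding B2_def by blast
    thus "x \<in> B1" unfolding B1_def by auto
  qed
  have neA: "A \<noteq> {}"
  proof -
    obtain D where "vec.subspace D" "D \<subseteq> C" "vec.dim D = r" using exists_sub_dim[OF C r] by blast
    hence "poset_weight le D \<in> A" unfolding A_def by blast
    thus ?thesis by blast
  qed
  have a: "\<exists>b\<in>B2. b \<le> a" if aA: "a \<in> A" for a
  proof -
    obtain D where D: "a = poset_weight le D" "vec.subspace D" "D \<subseteq> C" "vec.dim D = r"
      using aA unfolding A_def by blast
    define J0 where "J0 = supp_set D"
    have "D \<subseteq> CJ C J0" using D(3) by (auto simp: CJ_def J0_def supp_set_def)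
    hence "vec.dim D \<le> vec.dim (CJ C J0)" by (rule vec.dim_subset)
    hence "vec.dim (CJ C J0) \<ge> r" using D(4) by simp
    then obtain J where J: "J \<subseteq> J0" "vec.dim (CJ C J) = r" using CJ_descent[OF C] by blast
    have "card (ideal_of le J) \<le> card (ideal_of le J0)" by (rule ideal_mono[OF J(1)])
    hence "card (ideal_of le J) \<le> a" using D(1) by (simp add: poset_weight_def J0_def)
    moreover have "card (ideal_of le J) \<in> B2" using J(2) unfolding B2_def by blast
    ultimately show ?thesis by blast
  qed
  have b: "\<exists>a\<in>A. a \<le> b" if bB: "b \<in> B1" for b
  proof -
    obtain J where J: "b = card (ideal_of le J)" "vec.dim (CJ C J) \<ge> r"
      using bB unfolding B1_def by blast
    obtain D where D: "vec.subspace D" "D \<subseteq> CJ C J" "vec.dim D = r"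
      using exists_sub_dim[OF subspace_CJ[OF C] J(2)] by blast
    have "D \<subseteq> C" using D(2) by (auto simp: CJ_def)
    hence "poset_weight le D \<in> A" using D unfolding A_def by blast
    moreover have "card (ideal_of le (supp_set D)) \<le> card (ideal_of le J)"
      by (rule ideal_mono[OF supp_set_CJ[OF D(2)]])
    hence "poset_weight le D \<le> b" using J(1) by (simp add: poset_weight_def)
    ultimately show ?thesis by blast
  qed
  obtain b0 where b0: "b0 \<in> B2" "b0 \<le> Min A" using a[OF Min_in[OF fA neA]] by blast
  have neB2: "B2 \<noteq> {}" using b0(1) by blast
  have neB1: "B1 \<noteq> {}" using neB2 B21 by blast
  have "Min B2 \<le> b0" by (rule Min_le[OF fB2 b0(1)])
  hence 1: "Min B2 \<le> Min A" using b0(2) by linarith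
  have 2: "Min B1 \<le> Min B2" by (rule Min_antimono[OF B21 neB2 fB1])
  obtain a0 where a0: "a0 \<in> A" "a0 \<le> Min B1" using b[OF Min_in[OF fB1 neB1]] by blast
  have "Min A \<le> a0" by (rule Min_le[OF fA a0(1)])
  hence 3: "Min A \<le> Min B1" using a0(2) by linarith
  have g: "gen_weight le C r = Min A" by (simp add: gen_weight_def A_def)
  have "Min A = Min B1" "Min A = Min B2" using 1 2 3 by linarith+
  thus ?thesis using g unfolding B1_def B2_def by simp
qed

theorem theorem2:
  fixes C :: "('a::{finite,field} ^ 'n::finite) set"
    and le :: "'n \<Rightarrow> 'n \<Rightarrow> bool"
  assumes "vec.subspace C"
    and "is_poset le"
  shows "(\<forall>r. 1 \<le> r \<and> r \<le> vec.dim C \<longrightarrow>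
            gen_weight le C r
              = Min {card (ideal_of le J) | J. card J - code_rank (dual_code C) J \<ge> r}
          \<and> gen_weight le C r
              = Min {card (ideal_of le J) | J. card J - code_rank (dual_code C) J = r})
       \<and> (\<forall>s. 1 \<le> s \<and> s \<le> CARD('n) - vec.dim C \<longrightarrow>
            gen_weight (dual_poset le) (dual_code C) s
              = Min {card (ideal_of (dual_poset le) J) | J. card J - code_rank C J \<ge> s}
          \<and> gen_weight (dual_poset le) (dual_code C) s
              = Min {card (ideal_of (dual_poset le) J) | J. card J - code_rank C J = s})"
proof -
  have C: "vec.subspace C" by fact
  have eq1: "card J - code_rank (dual_code C) J = vec.dim (CJ C J)" for J
    using key_G[OF C] by (simp add: CJ_def)
  have eq2: "card J - code_rank C J = vec.dim (CJ (dual_code C) J)" for J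
    using key_G[OF subspace_dual[of C]] double_dual[OF C] by (simp add: CJ_def)
  have dd: "CARD('n) - vec.dim C = vec.dim (dual_code C)" using dim_dual[OF C] by simp
  show ?thesis
  proof (intro conjI allI impI)
    fix r assume r: "1 \<le> r \<and> r \<le> vec.dim C"
    show "gen_weight le C r
              = Min {card (ideal_of le J) | J. card J - code_rank (dual_code C) J \<ge> r}"
      using main_M[OF C, of r le] r by (simp add: eq1)
    show "gen_weight le C r
              = Min {card (ideal_of le J) | J. card J - code_rank (dual_code C) J = r}"
      using main_M[OF C, of r le] r by (simp add: eq1)
  next
    fix s assume s: "1 \<le> s \<and> s \<le> CARD('n) - vec.dim C"
    hence s': "s \<le> vec.dim (dual_code C)" using dd by simp
    show "gen_weight (dual_poset le) (dual_code C) s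
              = Min {card (ideal_of (dual_poset le) J) | J. card J - code_rank C J \<ge> s}"
      using main_M[OF subspace_dual s', of "dual_poset le"] by (simp add: eq2)
    show "gen_weight (dual_poset le) (dual_code C) s
              = Min {card (ideal_of (dual_poset le) J) | J. card J - code_rank C J = s}"
      using main_M[OF subspace_dual s', of "dual_poset le"] by (simp add: eq2)
  qed
qed

end
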